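(* Let $N\ge 2$, and let $f,g,\lambda,\Omega,u$ be as follows: $f:[0,+\infty)^2\to\mathbb{R}$ bounded measurable, $v\mapsto f(r,v)$ continuous uniformly in $r$, $r\mapsto f(r,v)$ nonincreasing; $g\in C([0,+\infty))\cap C^1((0,+\infty))$, $g(0)=0$, $g'>0$ on $(0,+\infty)$; $\lambda\in C([0,+\infty))$ positive and nondecreasing; $\Omega\subset\mathbb{R}^N$ a bounded domain; $u\in C^1(\Omega)\cap C(\overline\Omega)$ a weak solution of $-\nabla\cdot(g(|\nabla u|)\nabla u/|\nabla u|)=f(|x|,u)$, $u>0$ in $\Omega$, $u=0$ on $\partial\Omega$, such that for every $\varepsilon>0$ there is an open $U\supset\partial\Omega$ with $||\nabla u(x)|-\lambda(|x|)|<\varepsilon$ on $U\cap\Omega$. Extend $u$ by zero outside $\Omega$, let $L$ be its Lipschitz constant on $\mathbb{R}^N$, fix $R>0$ with $\overline\Omega\subset B_R$, and set $k:=2RL$. Let $u^t$ be the continuous Steiner symmetrization of $u$ with respect to $x_1$, and for $t\in(0,+\infty)$ let $M_1(t):=\{x:0<u(x)\le kt\}$ and $M_2(t):=\Omega\cap\{x:0<u^t(x)\le kt\}$. With $d(x):=\operatorname{dist}(x,\partial\Omega)$, we have $$\lim_{t\to 0}\sup\{d(x): x\in M_1(t)\cup M_2(t)\}=0.$$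
   Context: Weak solution: $\int_\Omega g(|\nabla u|)\frac{\nabla u\cdot\nabla v}{|\nabla u|}dx=\int_\Omega f(|x|,u)v\,dx$ for all $v\in W_0^{1,1}(\Omega)\cap W^{1,\infty}(\Omega)$ (with $g(|y|)y/|y|:=0$ for $y=0$). The zero extension of $u$ is Lipschitz continuous on $\mathbb{R}^N$ (as asserted in the paper). Continuous Steiner symmetrization (CStS): on the family of measurable subsets of $\mathbb{R}$ of finite measure there is a unique family of maps $E_t$, $0\le t\le+\infty$, such that (i) $\mathscr{L}^1(E_t(M))=\mathscr{L}^1(M)$; (ii) $M\subset N$ implies $E_t(M)\subset E_t(N)$; (iii) $E_t(E_s(M))=E_{s+t}(M)$; (iv) $E_t([x-R,x+R])=[xe^{-t}-R,xe^{-t}+R]$. For $M\subset\mathbb{R}^N$ measurable of finite measure, with $x=(x_1,x')$ and $M(x')=\{x_1:(x_1,x')\in M\}$, set $E_t(M)=\{(x_1,x'):x_1\in E_t(M(x'))\}$. For nonnegative measurable $u$ with $\mathscr{L}^N(\{u>c\})<\infty$ for all $c>0$, $u^t(x)=\sup\{c>0:x\in E_t(\{u>c\})\}$ if $x\in\bigcup_{c>0}E_t(\{u>c\})$, and $0$ otherwise; for continuous $u$, $u^t$ denotes its unique continuous representative (using the open precise representatives of $E_t(\{u>c\})$). The supremum over an empty set is taken as $0$. *)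

theory Defs
  imports "HOL-Analysis.Analysis"
begin

text \<open>Points of R^N (N = DIM('a) + 1 \<ge> 2) are pairs (x1, x') :: real \<times> 'a,
  with the Euclidean norm and inner product of the product space.\<close>

definition fin_meas_set :: "real set \<Rightarrow> bool" where
  "fin_meas_set M \<longleftrightarrow> M \<in> sets lebesgue \<and> emeasure lebesgue M < \<infinity>"

text \<open>A family of maps E t (t \<ge> 0) on measurable subsets of R of finite measure
  satisfying the characterising properties (i)-(iv) of continuous Steiner
  symmetrization.\<close>
definition cst_family :: "(real \<Rightarrow> real set \<Rightarrow> real set) \<Rightarrow> bool" where
  "cst_family E \<longleftrightarrow>
     (\<forall>t\<ge>0. \<forall>M. fin_meas_set M \<longrightarrow>
        E t M \<in> sets lebesgue \<and> emeasure lebesgue (E t M) = emeasure lebesgue M) \<and>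
     (\<forall>t\<ge>0. \<forall>M N. fin_meas_set M \<and> fin_meas_set N \<and> M \<subseteq> N \<longrightarrow> E t M \<subseteq> E t N) \<and>
     (\<forall>s\<ge>0. \<forall>t\<ge>0. \<forall>M. fin_meas_set M \<longrightarrow> E t (E s M) = E (s + t) M) \<and>
     (\<forall>t\<ge>0. \<forall>x. \<forall>R>0. E t {x - R .. x + R} = {x * exp (- t) - R .. x * exp (- t) + R})"

definition cst_set :: "(real \<Rightarrow> real set \<Rightarrow> real set) \<Rightarrow> real \<Rightarrow> (real \<times> 'a) set \<Rightarrow> (real \<times> 'a) set" where
  "cst_set E t M = {(x1, x'). x1 \<in> E t {y. (y, x') \<in> M}}"

definition cst_fun :: "(real \<Rightarrow> real set \<Rightarrow> real set) \<Rightarrow> real \<Rightarrow> (real \<times> 'a \<Rightarrow> real) \<Rightarrow> real \<times> 'a \<Rightarrow> real" where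
  "cst_fun E t u x =
     (if x \<in> (\<Union>c\<in>{0<..}. cst_set E t {y. u y > c})
      then Sup {c. c > 0 \<and> x \<in> cst_set E t {y. u y > c}} else 0)"

text \<open>Weak solution of -div(g(|Du|) Du/|Du|) = f(|x|,u) in \<Omega>, where Gu is the
  (classical) gradient of u; tested with C^1 functions compactly supported in \<Omega>.\<close>
definition weak_solution ::
  "('a::euclidean_space) set \<Rightarrow> (real \<Rightarrow> real) \<Rightarrow> (real \<Rightarrow> real \<Rightarrow> real) \<Rightarrow> ('a \<Rightarrow> real) \<Rightarrow> ('a \<Rightarrow> 'a) \<Rightarrow> bool" where
  "weak_solution \<Omega> g f u Gu \<longleftrightarrow>
     (\<forall>v Gv. (\<forall>x\<in>\<Omega>. (v has_derivative (\<lambda>h. Gv x \<bullet> h)) (at x)) \<and> continuous_on \<Omega> Gv \<and>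
        (\<exists>K. compact K \<and> K \<subseteq> \<Omega> \<and> (\<forall>x\<in>\<Omega> - K. v x = 0))
      \<longrightarrow> integral \<Omega> (\<lambda>x. (if Gu x = 0 then 0 else g (norm (Gu x)) / norm (Gu x)) * (Gu x \<bullet> Gv x))
          = integral \<Omega> (\<lambda>x. f (norm x) (u x) * v x))"

end

theory Submission
  imports Defs
begin
lemma ae_open_empty:
  fixes V :: "'b::euclidean_space set"
  assumes "open V" "AE x in lebesgue. P x" "\<forall>x\<in>V. \<not> P x"
  shows "V = {}"
proof (rule ccontr)
  assume ne: "V \<noteq> {}"
  obtain N where N: "N \<in> null_sets lebesgue" "{x \<in> space lebesgue. \<not> P x} \<subseteq> N"
    using assms(2) unfolding eventually_ae_filter by auto
  have "V \<subseteq> N" using N assms(3) by auto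
  hence "V \<in> null_sets lebesgue" using N(1) null_sets_completion_subset by blast
  hence "negligible V" by (simp add: negligible_iff_null_sets)
  thus False using open_not_negligible[OF assms(1) ne] by simp
qed

lemma E_empty:
  assumes E: "cst_family E" and t: "t \<ge> 0"
  shows "E t {} = {}"
proof -
  have fe: "fin_meas_set {}" unfolding fin_meas_set_def by simp
  have fi: "fin_meas_set {a..b}" for a b :: real
    unfolding fin_meas_set_def by (simp add: emeasure_lborel_Icc_eq)
  have E2: "\<forall>t\<ge>0. \<forall>M N. fin_meas_set M \<and> fin_meas_set N \<and> M \<subseteq> N \<longrightarrow> E t M \<subseteq> E t N"
   and E4: "\<forall>t\<ge>0. \<forall>x. \<forall>R>0. E t {x - R .. x + R} = {x * exp (- t) - R .. x * exp (- t) + R}"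
    using E unfolding cst_family_def by (argo, argo)
  have mono: "E t {} \<subseteq> E t {z - 1 .. z + 1}" for z
    using E2 t fe fi by simp
  have iv: "E t {z - 1 .. z + 1} = {z * exp (- t) - 1 .. z * exp (- t) + 1}" for z
    using E4 t by simp
  show ?thesis
  proof (rule ccontr)
    assume "E t {} \<noteq> {}"
    then obtain a where a: "a \<in> E t {}" by auto
    have eq: "(a + 3) * exp t * exp (- t) = a + 3" by (simp add: exp_minus)
    have "a \<in> {(a + 3) * exp t * exp (- t) - 1 .. (a + 3) * exp t * exp (- t) + 1}"
      using mono[of "(a + 3) * exp t"] iv[of "(a + 3) * exp t"] a by auto
    thus False unfolding eq by simp
  qed
qed

lemma fin_meas_lmeas: "M \<in> lmeasurable \<Longrightarrow> fin_meas_set M"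
  unfolding fin_meas_set_def fmeasurable_def by auto

lemma cst_lower:
  fixes u :: "real \<times> 'a::euclidean_space \<Rightarrow> real"
  assumes E: "cst_family E" and t: "t > 0"
    and lip: "lipschitz_on L UNIV u"
    and uext: "\<forall>x. x \<notin> \<Omega> \<longrightarrow> u x = 0"
    and OR: "\<Omega> \<subseteq> ball 0 R"
    and B: "\<forall>y. u y \<le> B"
    and x: "x \<in> \<Omega>"
  shows "u x - L * (R * (1 - exp (- t))) \<le> cst_fun E t u x"
proof -
  have E2: "\<forall>t\<ge>0. \<forall>M N. fin_meas_set M \<and> fin_meas_set N \<and> M \<subseteq> N \<longrightarrow> E t M \<subseteq> E t N"
   and E4: "\<forall>t\<ge>0. \<forall>x. \<forall>R>0. E t {x - R .. x + R} = {x * exp (- t) - R .. x * exp (- t) + R}"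
    using E unfolding cst_family_def by (argo, argo)
  have L0: "0 \<le> L" and Ld: "\<And>a b. dist (u a) (u b) \<le> L * dist a b"
    using lip unfolding lipschitz_on_def by auto
  have ucont: "continuous_on UNIV u" using lipschitz_on_continuous_on[OF lip] .
  obtain x1 x' where xx: "x = (x1, x')" by (cases x)
  have "norm x < R" using x OR by auto
  hence x1R: "\<bar>x1\<bar> < R" using norm_fst_le[of x1 x'] xx by simp
  hence R0: "R > 0" by simp
  define r where "r = R * (1 - exp (- t))"
  have r0: "r > 0" unfolding r_def using R0 t by simp
  have x1in: "x1 \<in> {x1 * exp (- t) - r .. x1 * exp (- t) + r}"
  proof -
    have "\<bar>x1 - x1 * exp (- t)\<bar> = \<bar>x1\<bar> * (1 - exp (- t))"
    proof -
      have "exp (- t) < 1" using t by simp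
      hence "\<bar>1 - exp (- t)\<bar> = 1 - exp (- t)" by simp
      moreover have "x1 - x1 * exp (- t) = x1 * (1 - exp (- t))" by (simp add: algebra_simps)
      ultimately show ?thesis by (simp add: abs_mult)
    qed
    also have "\<dots> \<le> r" unfolding r_def using x1R t
      by (intro mult_right_mono) auto
    finally show ?thesis by (auto simp: abs_le_iff)
  qed
  define A where "A = {c. c > 0 \<and> x \<in> cst_set E t {y. u y > c}}"
  have inA: "c \<in> A" if c: "0 < c" "c < u x - L * r" for c
  proof -
    let ?M = "{y. c < u (y, x')}"
    have sub: "{x1 - r .. x1 + r} \<subseteq> ?M"
    proof
      fix y assume y: "y \<in> {x1 - r .. x1 + r}"
      have "dist (y, x') (x1, x') = \<bar>y - x1\<bar>" by (simp add: dist_Pair_Pair dist_real_def)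
      also have "\<dots> \<le> r" using y by auto
      finally have "dist (u (y, x')) (u x) \<le> L * r"
        using Ld[of "(y, x')" x] xx L0 by (meson mult_left_mono order_trans)
      thus "y \<in> ?M" using c by (auto simp: dist_real_def)
    qed
    have Mopen: "open ?M"
    proof -
      have "continuous_on UNIV (\<lambda>y. u (y, x'))"
        by (intro continuous_on_compose2[OF ucont] continuous_intros) auto
      thus ?thesis using open_Collect_less[of "\<lambda>_. c" "\<lambda>y. u (y, x')"] by auto
    qed
    have Mbdd: "bounded ?M"
    proof (rule bounded_subset[OF bounded_cball[of 0 R]])
      show "?M \<subseteq> cball 0 R"
      proof
        fix y assume "y \<in> ?M"
        hence "(y, x') \<in> \<Omega>" using uext c by force
        hence "norm (y, x') < R" using OR by auto
        hence "norm y < R" using norm_fst_le[of y x'] by simp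
        thus "y \<in> cball 0 R" by simp
      qed
    qed
    have fM: "fin_meas_set ?M" by (rule fin_meas_lmeas, rule lmeasurable_open[OF Mbdd Mopen])
    have fI: "fin_meas_set {x1 - r .. x1 + r}"
      unfolding fin_meas_set_def by (simp add: emeasure_lborel_Icc_eq)
    have "E t {x1 - r .. x1 + r} \<subseteq> E t ?M" using E2 t fM fI sub by simp
    moreover have "E t {x1 - r .. x1 + r} = {x1 * exp (- t) - r .. x1 * exp (- t) + r}"
      using E4 t r0 by simp
    ultimately have "x1 \<in> E t ?M" using x1in by auto
    thus ?thesis unfolding A_def cst_set_def using c xx by auto
  qed
  have bdd: "bdd_above A"
  proof (rule bdd_aboveI[of _ B])
    fix c assume "c \<in> A"
    hence c0: "c > 0" and xc: "x \<in> cst_set E t {y. u y > c}" unfolding A_def by auto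
    show "c \<le> B"
    proof (rule ccontr)
      assume "\<not> c \<le> B"
      hence "{y. u y > c} = {}" 
      proof -
        have "\<not> c < u y" for y using B[rule_format, of y] \<open>\<not> c \<le> B\<close> by linarith
        thus ?thesis by auto
      qed
      hence "{y. (y, x') \<in> {y. u y > c}} = {}" by simp
      thus False using xc xx E_empty[OF E] t unfolding cst_set_def by auto
    qed
  qed
  have Sup_ge: "c \<le> cst_fun E t u x" if "c \<in> A" for c
  proof -
    have "x \<in> (\<Union>c\<in>{0<..}. cst_set E t {y. u y > c})" using that unfolding A_def by auto
    hence "cst_fun E t u x = Sup A" unfolding cst_fun_def A_def by simp
    thus ?thesis using cSup_upper[OF that bdd] by simp
  qed
  have nonneg: "0 \<le> cst_fun E t u x"
  proof (cases "x \<in> (\<Union>c\<in>{0<..}. cst_set E t {y. u y > c})")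
    case True
    then obtain c where "c \<in> A" unfolding A_def by auto
    thus ?thesis using Sup_ge[of c] unfolding A_def by force
  next
    case False thus ?thesis unfolding cst_fun_def by simp
  qed
  show ?thesis
  proof (cases "u x - L * r \<le> 0")
    case True thus ?thesis using nonneg r_def by simp
  next
    case False
    have "u x - L * r \<le> cst_fun E t u x"
      by (rule dense_le_bounded[of 0]) (use False inA Sup_ge in auto)
    thus ?thesis unfolding r_def .
  qed
qed

theorem lemma4:
  fixes f :: "real \<Rightarrow> real \<Rightarrow> real"
    and g lam :: "real \<Rightarrow> real"
    and \<Omega> :: "(real \<times> 'a::euclidean_space) set"
    and u :: "real \<times> 'a \<Rightarrow> real"
    and Gu :: "real \<times> 'a \<Rightarrow> real \<times> 'a"
    and L R :: real
    and E :: "real \<Rightarrow> real set \<Rightarrow> real set"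
    and ut :: "real \<Rightarrow> real \<times> 'a \<Rightarrow> real"
  assumes f_meas: "set_borel_measurable borel ({0..} \<times> {0..}) (\<lambda>(r, v). f r v)"
    and f_bdd: "\<exists>C. \<forall>r\<ge>0. \<forall>v\<ge>0. \<bar>f r v\<bar> \<le> C"
    and f_cont: "\<forall>v\<ge>0. \<forall>\<epsilon>>0. \<exists>\<delta>>0. \<forall>r\<ge>0. \<forall>w\<ge>0. \<bar>w - v\<bar> < \<delta> \<longrightarrow> \<bar>f r w - f r v\<bar> < \<epsilon>"
    and f_mono: "\<forall>v\<ge>0. \<forall>r1 r2. 0 \<le> r1 \<and> r1 \<le> r2 \<longrightarrow> f r2 v \<le> f r1 v"
    and g_cont: "continuous_on {0..} g"
    and g_diff: "\<forall>s>0. g differentiable (at s)"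
    and g_C1: "continuous_on {0<..} (deriv g)"
    and g0: "g 0 = 0"
    and g_pos: "\<forall>s>0. deriv g s > 0"
    and lam_cont: "continuous_on {0..} lam"
    and lam_pos: "\<forall>r\<ge>0. lam r > 0"
    and lam_mono: "mono_on {0..} lam"
    and dom: "open \<Omega>" "connected \<Omega>" "bounded \<Omega>" "\<Omega> \<noteq> {}"
    and u_grad: "\<forall>x\<in>\<Omega>. (u has_derivative (\<lambda>h. Gu x \<bullet> h)) (at x)"
    and u_C1: "continuous_on \<Omega> Gu"
    and u_cont: "continuous_on (closure \<Omega>) u"
    and u_weak: "weak_solution \<Omega> g f u Gu"
    and u_pos: "\<forall>x\<in>\<Omega>. u x > 0"
    and u_ext: "\<forall>x. x \<notin> \<Omega> \<longrightarrow> u x = 0"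
    and u_bdry: "\<forall>\<epsilon>>0. \<exists>U. open U \<and> frontier \<Omega> \<subseteq> U \<and>
                   (\<forall>x\<in>U \<inter> \<Omega>. \<bar>norm (Gu x) - lam (norm x)\<bar> < \<epsilon>)"
    and L_lip: "lipschitz_on L UNIV u"
    and L_min: "\<forall>K. lipschitz_on K UNIV u \<longrightarrow> L \<le> K"
    and R: "R > 0" "closure \<Omega> \<subseteq> ball 0 R"
    and E: "cst_family E"
    and ut: "\<forall>t>0. continuous_on UNIV (ut t) \<and>
               (AE x in lebesgue. ut t x = cst_fun E t u x)"
  shows "((\<lambda>t. Sup ((\<lambda>x. infdist x (frontier \<Omega>)) `
             ({x. 0 < u x \<and> u x \<le> 2 * R * L * t} \<union>
              (\<Omega> \<inter> {x. 0 < ut t x \<and> ut t x \<le> 2 * R * L * t}))))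
          \<longlongrightarrow> 0) (at_right 0)"
proof -
  let ?F = "frontier \<Omega>"
  have L0: "0 \<le> L" and Ld: "\<And>a b. dist (u a) (u b) \<le> L * dist a b"
    using L_lip unfolding lipschitz_on_def by auto
  have OR: "\<Omega> \<subseteq> ball 0 R" using R(2) closure_subset by blast
  have "\<Omega> \<noteq> UNIV" using dom(3) not_bounded_UNIV by metis
  hence "?F \<noteq> {}" using frontier_not_empty dom(4) by blast
  then obtain p where p: "p \<in> ?F" by auto
  have pO: "p \<notin> \<Omega>" using p dom(1) by (simp add: frontier_def interior_open)
  have up: "u p = 0" using u_ext pO by blast
  have pcl: "p \<in> closure \<Omega>" using p by (simp add: frontier_def)
  have pR: "norm p < R" using pcl R(2) by auto
  have ule: "u y \<le> L * dist y p" for y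
    using Ld[of y p] up by (simp add: dist_real_def)
  have B: "\<forall>y. u y \<le> 2 * R * L"
  proof
    fix y show "u y \<le> 2 * R * L"
    proof (cases "y \<in> \<Omega>")
      case True
      hence "norm y < R" using OR by auto
      hence "dist y p \<le> 2 * R" using pR norm_triangle_ineq4[of y p] by (simp add: dist_norm)
      hence "L * dist y p \<le> L * (2 * R)" using L0 by (rule mult_left_mono)
      thus ?thesis using ule[of y] by (simp add: algebra_simps)
    next
      case False hence "u y = 0" using u_ext by blast
      thus ?thesis using L0 R(1) by simp
    qed
  qed
  obtain y0 where y0: "y0 \<in> \<Omega>" using dom(4) by auto
  have Lpos: "L > 0"
  proof (rule ccontr)
    assume "\<not> L > 0" hence "L = 0" using L0 by simp
    moreover have "0 < u y0" using u_pos y0 by blast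
    ultimately show False using ule[of y0] by simp
  qed
  have ucont: "continuous_on UNIV u" using lipschitz_on_continuous_on[OF L_lip] .
  have lower: "u x - L * (R * (1 - exp (- t))) \<le> ut t x" if t: "t > 0" and x: "x \<in> \<Omega>" for t x
  proof -
    let ?c = "L * (R * (1 - exp (- t)))"
    have ctu: "continuous_on UNIV (ut t)" using ut t by blast
    have ae: "AE x in lebesgue. ut t x = cst_fun E t u x" using ut t by blast
    have "\<Omega> \<inter> {x. ut t x < u x - ?c} = {}"
    proof (rule ae_open_empty[OF _ ae])
      show "open (\<Omega> \<inter> {x. ut t x < u x - ?c})"
        by (rule open_Int[OF dom(1)], rule open_Collect_less[OF ctu],
            rule continuous_on_diff[OF ucont continuous_on_const])
      show "\<forall>x\<in>\<Omega> \<inter> {x. ut t x < u x - ?c}. ut t x \<noteq> cst_fun E t u x"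
      proof
        fix x assume xx: "x \<in> \<Omega> \<inter> {x. ut t x < u x - ?c}"
        hence "u x - ?c \<le> cst_fun E t u x" using cst_lower[OF E t L_lip u_ext OR B] xx by blast
        thus "ut t x \<noteq> cst_fun E t u x" using xx by auto
      qed
    qed
    thus ?thesis using x by auto
  qed
  define S where "S t = {x. 0 < u x \<and> u x \<le> 2 * R * L * t} \<union>
              (\<Omega> \<inter> {x. 0 < ut t x \<and> ut t x \<le> 2 * R * L * t})" for t
  have key: "x \<in> \<Omega> \<and> u x \<le> 3 * R * L * t" if t: "t > 0" and x: "x \<in> S t" for t x
  proof -
    have "1 - exp (- t) \<le> t" using exp_ge_add_one_self[of "- t"] by simp
    hence b: "L * (R * (1 - exp (- t))) \<le> L * (R * t)" using L0 R(1)
      by (intro mult_left_mono) auto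
    have rlt: "0 \<le> R * L * t" using t R(1) Lpos by simp
    have tt: "2 * R * L * t \<le> 3 * R * L * t" using rlt by linarith
    have eq3: "L * (R * t) = R * L * t" "3 * R * L * t = 2 * R * L * t + R * L * t" by (simp_all add: algebra_simps)
    show ?thesis
    proof (cases "0 < u x \<and> u x \<le> 2 * R * L * t")
      case True
      have "x \<in> \<Omega>"
      proof (rule ccontr)
        assume "x \<notin> \<Omega>" hence "u x = 0" using u_ext by blast
        thus False using True by simp
      qed
      thus ?thesis using True tt by simp
    next
      case False
      hence xO: "x \<in> \<Omega>" and "ut t x \<le> 2 * R * L * t" using x unfolding S_def by auto
      thus ?thesis using lower[OF t xO] b eq3 by linarith
    qed
  qed
  have nonempty: "S t \<noteq> {}" if t: "t > 0" for t
  proof -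
    have "2 * R * t > 0" using t R(1) by simp
    then obtain y where y: "y \<in> \<Omega>" "dist y p < 2 * R * t"
      using pcl unfolding closure_approachable by blast
    have "L * dist y p \<le> L * (2 * R * t)" using L0 y(2) by (intro mult_left_mono) auto
    hence "u y \<le> 2 * R * L * t" using ule[of y] by (simp add: algebra_simps)
    hence "y \<in> S t" using u_pos y unfolding S_def by auto
    thus ?thesis by auto
  qed
  show ?thesis
  proof (rule tendstoI)
    fix e :: real assume e: "e > 0"
    define \<epsilon> where "\<epsilon> = e / 2"
    have \<epsilon>: "\<epsilon> > 0" "\<epsilon> < e" using e unfolding \<epsilon>_def by auto
    define K where "K = closure \<Omega> \<inter> {x. \<epsilon> \<le> infdist x ?F}"
    have KO: "K \<subseteq> \<Omega>"
    proof
      fix x assume "x \<in> K"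
      hence "x \<in> closure \<Omega>" "\<epsilon> \<le> infdist x ?F" unfolding K_def by auto
      show "x \<in> \<Omega>"
      proof (rule ccontr)
        assume "x \<notin> \<Omega>"
        hence "x \<in> ?F" using \<open>x \<in> closure \<Omega>\<close> dom(1) by (simp add: frontier_def interior_open)
        hence "infdist x ?F = 0" by simp
        thus False using \<open>\<epsilon> \<le> infdist x ?F\<close> \<epsilon> by simp
      qed
    qed
    have Kc: "compact K"
    proof -
      have "closed {x. \<epsilon> \<le> infdist x ?F}"
        by (intro closed_Collect_le continuous_intros continuous_on_infdist)
      hence "closed K" unfolding K_def by auto
      moreover have "bounded K" unfolding K_def using dom(3) bounded_closure bounded_subset by blast
      ultimately show ?thesis using compact_eq_bounded_closed by blast
    qed
    obtain m where m: "m > 0" "\<forall>z\<in>\<Omega>. u z < m \<longrightarrow> infdist z ?F < \<epsilon>"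
    proof (cases "K = {}")
      case True
      show ?thesis
      proof (rule that[of 1])
        show "\<forall>z\<in>\<Omega>. u z < 1 \<longrightarrow> infdist z ?F < \<epsilon>"
        proof (intro ballI impI)
          fix z assume z: "z \<in> \<Omega>"
          hence "z \<in> closure \<Omega>" using closure_subset by blast
          hence "\<not> \<epsilon> \<le> infdist z ?F" using True unfolding K_def by blast
          thus "infdist z ?F < \<epsilon>" by simp
        qed
      qed simp
    next
      case False
      obtain z0 where z0: "z0 \<in> K" "\<forall>y\<in>K. u z0 \<le> u y"
        using continuous_attains_inf[OF Kc False continuous_on_subset[OF ucont]] by blast
      have "u z0 > 0" using z0(1) KO u_pos by auto
      moreover have "\<forall>z\<in>\<Omega>. u z < u z0 \<longrightarrow> infdist z ?F < \<epsilon>"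
      proof (intro ballI impI)
        fix z assume z: "z \<in> \<Omega>" "u z < u z0"
        show "infdist z ?F < \<epsilon>"
        proof (rule ccontr)
          assume "\<not> infdist z ?F < \<epsilon>"
          hence "z \<in> K" using z(1) closure_subset unfolding K_def by auto
          thus False using z0(2) z(2) by fastforce
        qed
      qed
      ultimately show ?thesis using that by blast
    qed
    define \<delta> where "\<delta> = m / (3 * R * L)"
    have \<delta>: "\<delta> > 0" unfolding \<delta>_def using m R(1) Lpos by simp
    show "\<forall>\<^sub>F t in at_right 0. dist (Sup ((\<lambda>x. infdist x ?F) `
             ({x. 0 < u x \<and> u x \<le> 2 * R * L * t} \<union>
              (\<Omega> \<inter> {x. 0 < ut t x \<and> ut t x \<le> 2 * R * L * t})))) 0 < e"
      unfolding eventually_at_right_field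
    proof (intro exI[of _ \<delta>] conjI allI impI)
      show "\<delta> > 0" by (rule \<delta>)
      fix t :: real assume t: "t > 0" "t < \<delta>"
      have "3 * R * L * t < m"
        using t(2) R(1) Lpos unfolding \<delta>_def by (simp add: field_simps)
      hence all: "\<forall>x\<in>S t. infdist x ?F < \<epsilon>"
      proof (intro ballI)
        fix x assume "3 * R * L * t < m" "x \<in> S t"
        hence "x \<in> \<Omega>" "u x < m" using key[OF t(1)] by (blast, fastforce)
        thus "infdist x ?F < \<epsilon>" using m(2) by blast
      qed
      let ?I = "(\<lambda>x. infdist x ?F) ` S t"
      have ne: "?I \<noteq> {}" using nonempty[OF t(1)] by auto
      have up: "Sup ?I \<le> \<epsilon>" using all ne by (intro cSup_least) auto
      have bdd: "bdd_above ?I" using all by (intro bdd_aboveI[of _ \<epsilon>]) auto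
      obtain x where "x \<in> S t" using nonempty[OF t(1)] by auto
      hence "infdist x ?F \<le> Sup ?I" using bdd by (intro cSup_upper) auto
      hence "0 \<le> Sup ?I" using infdist_nonneg order_trans by blast
      hence "dist (Sup ?I) 0 < e" using up \<epsilon> by (simp add: dist_real_def)
      thus "dist (Sup ((\<lambda>x. infdist x ?F) `
             ({x. 0 < u x \<and> u x \<le> 2 * R * L * t} \<union>
              (\<Omega> \<inter> {x. 0 < ut t x \<and> ut t x \<le> 2 * R * L * t})))) 0 < e"
        unfolding S_def by simp
    qed
  qed
qed

end
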